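(* Let $N=(V,E,c)$ be a network with $c_{\min}=\inf_{x\in V}c(x)>0$, fix $o\in V$ and $\gamma\in\mathbb{R}$, and let $K:V\to[0,\infty)$ be defined by $K(x)=c(x)\min\{1,\langle x\rangle^{-2}(\log\langle x\rangle)^\gamma\}$. Let $p_n$ denote the $n$-step transition probabilities of the random walk on the network with killing $(V,E,c,K)$. Then there exists a constant $\kappa=\kappa(\gamma)>0$ such that \[ p_n(x,o)\leq\sqrt{\frac{8c(o)}{c_{\min}}}\exp\big[-\kappa(\log n)^{\gamma/2}\big] \] for every $x\in V$ and $n\geq2$. In particular, if $\gamma>2$ then $\lim_{n\to\infty}\frac{\log\sup_{u\in V}p_n(u,o)}{\log n}=-\infty$.
   Context: A network $(V,E,c)$ has conductances $c:E\to(0,\infty)$; $c(u)$ is the total conductance of oriented edges emanating from $u$ and $c(u,v)$ that of oriented edges from $u$ to $v$. $d$ is the graph distance in $(V,E)$ and $\langle x\rangle=2\vee d(o,x)$. For a killing function $K:V\to[0,\infty)$, the random walk on $(V,E,c,K)$ is the Markov chain on $V\cup\{\dagger\}$ with $P(u,v)=c(u,v)/(c(u)+K(u))$, $P(u,\dagger)=K(u)/(c(u)+K(u))$ for $u,v\in V$, and $P(\dagger,\dagger)=1$; $p_n=P^n$. *)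

theory Defs
  imports "HOL-Analysis.Analysis"
begin

text \<open>A network is given by its (oriented-edge) conductance function:
  cond u v = total conductance of oriented edges from u to v (0 if none).\<close>

definition adj :: "('v \<Rightarrow> 'v \<Rightarrow> real) \<Rightarrow> 'v \<Rightarrow> 'v \<Rightarrow> bool" where
  "adj cond u v \<longleftrightarrow> cond u v > 0"

definition network :: "('v \<Rightarrow> 'v \<Rightarrow> real) \<Rightarrow> bool" where
  "network cond \<longleftrightarrow>
     (\<forall>u v. cond u v \<ge> 0) \<and> (\<forall>u v. cond u v = cond v u) \<and>
     (\<forall>u. cond u summable_on UNIV) \<and> (\<forall>x y. (adj cond)\<^sup>*\<^sup>* x y)"

definition cv :: "('v \<Rightarrow> 'v \<Rightarrow> real) \<Rightarrow> 'v \<Rightarrow> real" where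
  "cv cond u = (\<Sum>\<^sub>\<infinity>v. cond u v)"

definition cmin :: "('v \<Rightarrow> 'v \<Rightarrow> real) \<Rightarrow> real" where
  "cmin cond = (INF x. cv cond x)"

definition gdist :: "('v \<Rightarrow> 'v \<Rightarrow> real) \<Rightarrow> 'v \<Rightarrow> 'v \<Rightarrow> nat" where
  "gdist cond x y = (LEAST n. (adj cond ^^ n) x y)"

definition bracket :: "('v \<Rightarrow> 'v \<Rightarrow> real) \<Rightarrow> 'v \<Rightarrow> 'v \<Rightarrow> real" where
  "bracket cond r x = real (max 2 (gdist cond r x))"

definition killing :: "real \<Rightarrow> ('v \<Rightarrow> 'v \<Rightarrow> real) \<Rightarrow> 'v \<Rightarrow> 'v \<Rightarrow> real" where
  "killing \<gamma> cond r x = cv cond x *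
     min 1 ((bracket cond r x) powr (-2) * (ln (bracket cond r x)) powr \<gamma>)"

definition trans :: "('v \<Rightarrow> 'v \<Rightarrow> real) \<Rightarrow> ('v \<Rightarrow> real) \<Rightarrow> 'v \<Rightarrow> 'v \<Rightarrow> real" where
  "trans cond K u v = cond u v / (cv cond u + K u)"

text \<open>n-step transition probabilities p_n(x,y) for x,y in V (the cemetery is absorbing,
  so only paths inside V contribute)\<close>
fun pn :: "('v \<Rightarrow> 'v \<Rightarrow> real) \<Rightarrow> ('v \<Rightarrow> real) \<Rightarrow> nat \<Rightarrow> 'v \<Rightarrow> 'v \<Rightarrow> real" where
  "pn cond K 0 x y = (if x = y then 1 else 0)"
| "pn cond K (Suc n) x y = (\<Sum>\<^sub>\<infinity>z. trans cond K x z * pn cond K n z y)"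

end

theory Submission
  imports Defs "HOL-Real_Asymp.Real_Asymp"
begin

locale net =
  fixes cond :: "'v \<Rightarrow> 'v \<Rightarrow> real" and K :: "'v \<Rightarrow> real"
  assumes nonneg: "\<And>u v. cond u v \<ge> 0"
    and sym: "\<And>u v. cond u v = cond v u"
    and summ: "\<And>u. cond u summable_on UNIV"
    and Knn: "\<And>u. K u \<ge> 0"
    and cvpos: "\<And>u. cv cond u > 0"
    and conn: "\<And>x y. (adj cond)\<^sup>*\<^sup>* x y"
begin

definition pi :: "'v \<Rightarrow> real" where "pi u = cv cond u + K u"

abbreviation w :: "'v \<Rightarrow> 'v \<Rightarrow> real" where "w \<equiv> trans cond K"

lemma pi_pos: "pi u > 0" using cvpos[of u] Knn[of u] by (simp add: pi_def)

lemma w_eq: "w u v = cond u v / pi u" by (simp add: trans_def pi_def)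

lemma w_nn: "w u v \<ge> 0" using nonneg[of u v] pi_pos[of u] by (simp add: w_eq)

lemma w_fun: "w u = (\<lambda>v. cond u v / pi u)" by (rule ext) (simp add: w_eq)

lemma w_summ: "w u summable_on UNIV"
proof -
  have "(\<lambda>v. cond u v * (1 / pi u)) summable_on UNIV"
    by (rule summable_on_cmult_left[OF summ])
  thus ?thesis by (simp add: w_fun)
qed

lemma w_sum: "infsum (w u) UNIV = cv cond u / pi u"
proof -
  have "infsum (\<lambda>v. cond u v * (1 / pi u)) UNIV = infsum (cond u) UNIV * (1 / pi u)"
    by (rule infsum_cmult_left) (simp add: summ)
  thus ?thesis by (simp add: w_fun cv_def)
qed

lemma cv_le_pi: "cv cond u \<le> pi u" using Knn[of u] by (simp add: pi_def)

lemma w_sum_le1: "infsum (w u) UNIV \<le> 1"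
  using w_sum cv_le_pi pi_pos by (simp add: divide_le_eq_1)

lemma w_fin_le1:
  assumes "finite F" shows "sum (w u) F \<le> 1"
proof -
  have "sum (w u) F \<le> infsum (w u) UNIV"
    by (rule finite_sum_le_infsum[OF w_summ]) (use assms w_nn in auto)
  thus ?thesis using w_sum_le1[of u] by linarith
qed

lemma cond_fin_le:
  assumes "finite F" shows "sum (cond u) F \<le> cv cond u"
  unfolding cv_def
  by (rule finite_sum_le_infsum[OF summ]) (use assms nonneg in auto)

lemma wf_summ:
  assumes "\<And>z. 0 \<le> f z" "\<And>z. f z \<le> B"
  shows "(\<lambda>z. w u z * f z) summable_on UNIV"
proof -
  have "(\<lambda>z. w u z * B) summable_on UNIV" by (rule summable_on_cmult_left[OF w_summ])
  thus ?thesis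
    by (rule summable_on_comparison_test) (use assms w_nn in \<open>auto intro: mult_left_mono\<close>)
qed

lemma wf_bound:
  assumes "\<And>z. 0 \<le> f z" "\<And>z. f z \<le> B"
  shows "infsum (\<lambda>z. w u z * f z) UNIV \<le> (cv cond u / pi u) * B"
proof -
  have B: "B \<ge> 0" using assms(1)[of undefined] assms(2)[of undefined] by linarith
  have "infsum (\<lambda>z. w u z * f z) UNIV \<le> infsum (\<lambda>z. w u z * B) UNIV"
    by (rule infsum_mono[OF wf_summ[OF assms] summable_on_cmult_left[OF w_summ]])
       (use assms w_nn in \<open>auto intro: mult_left_mono\<close>)
  also have "\<dots> = infsum (w u) UNIV * B" by (rule infsum_cmult_left) (simp add: w_summ)
  finally show ?thesis by (simp add: w_sum)
qed

abbreviation p :: "nat \<Rightarrow> 'v \<Rightarrow> 'v \<Rightarrow> real" where "p n x y \<equiv> pn cond K n x y"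

lemma p_bounds: "0 \<le> p n x y \<and> p n x y \<le> 1"
proof (induction n arbitrary: x)
  case 0 thus ?case by simp
next
  case (Suc n)
  have nn: "0 \<le> p (Suc n) x y"
    by (simp, rule infsum_nonneg) (use Suc w_nn in auto)
  have "p (Suc n) x y \<le> (cv cond x / pi x) * 1"
    using wf_bound[of "\<lambda>z. p n z y" 1 x] Suc by simp
  also have "\<dots> \<le> 1" using cv_le_pi pi_pos by (simp add: divide_le_eq_1)
  finally show ?case using nn by simp
qed

lemma p_nn: "0 \<le> p n x y" and p_le1: "p n x y \<le> 1" using p_bounds by auto

lemma p_summ: "(\<lambda>z. w x z * p n z y) summable_on UNIV"
  by (rule wf_summ[of _ 1]) (use p_bounds in auto)

fun qF :: "'v set \<Rightarrow> nat \<Rightarrow> 'v \<Rightarrow> 'v \<Rightarrow> real" where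
  "qF F 0 x y = (if x = y then 1 else 0)"
| "qF F (Suc n) x y = (\<Sum>z\<in>F. w x z * qF F n z y)"

lemma qF_nn: "0 \<le> qF F n x y"
  by (induction n arbitrary: x) (auto intro!: sum_nonneg mult_nonneg_nonneg w_nn)

lemma qF_mono:
  assumes "F \<subseteq> G" "finite G"
  shows "qF F n x y \<le> qF G n x y"
proof (induction n arbitrary: x)
  case 0 thus ?case by simp
next
  case (Suc n)
  have "(\<Sum>z\<in>F. w x z * qF F n z y) \<le> (\<Sum>z\<in>F. w x z * qF G n z y)"
    by (rule sum_mono) (use Suc w_nn in \<open>auto intro: mult_left_mono\<close>)
  also have "\<dots> \<le> (\<Sum>z\<in>G. w x z * qF G n z y)"
    by (rule sum_mono2) (use assms w_nn qF_nn in auto)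
  finally show ?case by simp
qed

lemma approx:
  assumes "\<epsilon> > 0"
  shows "\<exists>F. finite F \<and> p n x y \<le> qF F n x y + \<epsilon>"
  using assms
proof (induction n arbitrary: x \<epsilon>)
  case 0
  thus ?case by (intro exI[of _ "{}"]) simp
next
  case (Suc n)
  define f where "f = (\<lambda>z. w x z * p n z y)"
  have fs: "f summable_on UNIV" unfolding f_def by (rule p_summ)
  have e2: "\<epsilon>/2 > 0" using Suc by simp
  obtain Z where Z: "finite Z" "dist (sum f Z) (infsum f UNIV) \<le> \<epsilon>/2"
    using infsum_finite_approximation[OF fs e2] by blast
  have "\<forall>z. \<exists>F. finite F \<and> p n z y \<le> qF F n z y + \<epsilon>/2" using Suc.IH[OF e2] by blast
  then obtain Fz where Fz: "\<And>z. finite (Fz z) \<and> p n z y \<le> qF (Fz z) n z y + \<epsilon>/2" by metis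
  define G where "G = Z \<union> (\<Union>z\<in>Z. Fz z)"
  have fG: "finite G" unfolding G_def using Z(1) Fz by auto
  have "p (Suc n) x y = infsum f UNIV" by (simp add: f_def)
  also have "\<dots> \<le> sum f Z + \<epsilon>/2"
  proof -
    have "\<bar>sum f Z - infsum f UNIV\<bar> \<le> \<epsilon>/2" using Z(2) by (simp add: dist_real_def)
    thus ?thesis by arith
  qed
  also have "sum f Z \<le> (\<Sum>z\<in>Z. w x z * (qF G n z y + \<epsilon>/2))"
    unfolding f_def
  proof (rule sum_mono)
    fix z assume z: "z \<in> Z"
    have "p n z y \<le> qF (Fz z) n z y + \<epsilon>/2" using Fz by blast
    also have "qF (Fz z) n z y \<le> qF G n z y"
      by (rule qF_mono) (use z fG in \<open>auto simp: G_def\<close>)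
    finally show "w x z * p n z y \<le> w x z * (qF G n z y + \<epsilon>/2)"
      using w_nn by (auto intro: mult_left_mono)
  qed
  also have "\<dots> = (\<Sum>z\<in>Z. w x z * qF G n z y) + \<epsilon>/2 * sum (w x) Z"
    by (simp add: distrib_left sum.distrib sum_distrib_left mult.commute)
  also have "(\<Sum>z\<in>Z. w x z * qF G n z y) \<le> (\<Sum>z\<in>G. w x z * qF G n z y)"
    by (rule sum_mono2) (use fG w_nn qF_nn in \<open>auto simp: G_def\<close>)
  also have "\<epsilon>/2 * sum (w x) Z \<le> \<epsilon>/2 * 1"
    using w_fin_le1[OF Z(1)] e2 by (intro mult_left_mono) auto
  finally have "p (Suc n) x y \<le> qF G (Suc n) x y + \<epsilon>" by simp
  thus ?case using fG by blast
qed

end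

locale fin = net cond K for cond :: "'v \<Rightarrow> 'v \<Rightarrow> real" and K +
  fixes F :: "'v set"
  assumes finF: "finite F"
begin

definition Pop :: "('v \<Rightarrow> real) \<Rightarrow> 'v \<Rightarrow> real" where
  "Pop f u = (\<Sum>v\<in>F. w u v * f v)"

definition ip :: "('v \<Rightarrow> real) \<Rightarrow> ('v \<Rightarrow> real) \<Rightarrow> real" where
  "ip f g = (\<Sum>u\<in>F. pi u * f u * g u)"

lemma Pop_add: "Pop (\<lambda>u. f u + g u) = (\<lambda>u. Pop f u + Pop g u)"
  by (rule ext) (simp add: Pop_def distrib_left sum.distrib)
lemma Pop_diff: "Pop (\<lambda>u. f u - g u) = (\<lambda>u. Pop f u - Pop g u)"
  by (rule ext) (simp add: Pop_def right_diff_distrib sum_subtractf)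
lemma Pop_cmult: "Pop (\<lambda>u. c * f u) = (\<lambda>u. c * Pop f u)"
  by (rule ext) (simp add: Pop_def sum_distrib_left mult.left_commute)
lemma Pop_div: "Pop (\<lambda>u. f u / c) = (\<lambda>u. Pop f u / c)"
  by (rule ext) (simp add: Pop_def sum_divide_distrib)
lemma Pop_zero: "Pop (\<lambda>u. 0) = (\<lambda>u. 0)"
  by (rule ext) (simp add: Pop_def)
lemma Pop_sum: "Pop (\<lambda>u. \<Sum>i\<in>I. f i u) = (\<lambda>u. \<Sum>i\<in>I. Pop (f i) u)"
  by (rule ext) (simp add: Pop_def sum_distrib_left sum.swap[of _ F I])

lemma ip_add_left: "ip (\<lambda>u. f u + g u) h = ip f h + ip g h"
  by (simp add: ip_def algebra_simps sum.distrib)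
lemma ip_add_right: "ip h (\<lambda>u. f u + g u) = ip h f + ip h g"
  by (simp add: ip_def algebra_simps sum.distrib)
lemma ip_diff_left: "ip (\<lambda>u. f u - g u) h = ip f h - ip g h"
  by (simp add: ip_def algebra_simps sum_subtractf)
lemma ip_diff_right: "ip h (\<lambda>u. f u - g u) = ip h f - ip h g"
  by (simp add: ip_def algebra_simps sum_subtractf)
lemma ip_sym: "ip f g = ip g f"
  by (simp add: ip_def algebra_simps)

lemma Pop_alt: "Pop f u = (\<Sum>v\<in>F. cond u v * f v) / pi u"
  by (simp add: Pop_def w_eq sum_divide_distrib)

lemma ip_Pop: "ip (Pop f) g = ip f (Pop g)"
proof -
  have pn: "\<And>u. pi u \<noteq> 0" using pi_pos by (metis less_irrefl)
  have A: "pi u * Pop f u * g u = (\<Sum>v\<in>F. cond u v * f v * g u)" for u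
  proof -
    have "pi u * Pop f u * g u = (\<Sum>v\<in>F. cond u v * f v) * g u"
      using pn[of u] by (simp add: Pop_alt)
    thus ?thesis by (simp add: sum_distrib_right)
  qed
  have B: "pi u * f u * Pop g u = (\<Sum>v\<in>F. cond u v * g v * f u)" for u
  proof -
    have "pi u * f u * Pop g u = (\<Sum>v\<in>F. cond u v * g v) * f u"
      using pn[of u] by (simp add: Pop_alt)
    thus ?thesis by (simp add: sum_distrib_right)
  qed
  have "ip (Pop f) g = (\<Sum>u\<in>F. \<Sum>v\<in>F. cond u v * f v * g u)"
    unfolding ip_def using A by simp
  also have "\<dots> = (\<Sum>v\<in>F. \<Sum>u\<in>F. cond u v * f v * g u)" by (rule sum.swap)
  also have "\<dots> = (\<Sum>v\<in>F. \<Sum>u\<in>F. cond v u * g u * f v)"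
    by (intro sum.cong refl) (metis sym mult.commute mult.assoc)
  also have "\<dots> = ip f (Pop g)"
    unfolding ip_def using B by simp
  finally show ?thesis .
qed

lemma Pop_sq_le: "(Pop f u)\<^sup>2 \<le> (\<Sum>v\<in>F. w u v * (f v)\<^sup>2)"
proof -
  define a where "a = Pop f u"
  have "0 \<le> (\<Sum>v\<in>F. w u v * (f v - a)\<^sup>2)" by (rule sum_nonneg) (simp add: w_nn)
  also have "(\<Sum>v\<in>F. w u v * (f v - a)\<^sup>2)
      = (\<Sum>v\<in>F. w u v * (f v)\<^sup>2) - 2 * a * (\<Sum>v\<in>F. w u v * f v) + a\<^sup>2 * (\<Sum>v\<in>F. w u v)"
    by (simp add: power2_eq_square algebra_simps sum.distrib sum_subtractf sum_distrib_left)
  finally have 1: "0 \<le> (\<Sum>v\<in>F. w u v * (f v)\<^sup>2) - 2 * a * a + a\<^sup>2 * (\<Sum>v\<in>F. w u v)"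
    by (simp add: a_def Pop_def)
  have "a\<^sup>2 * (\<Sum>v\<in>F. w u v) \<le> a\<^sup>2 * 1"
    by (rule mult_left_mono) (use w_fin_le1[OF finF] in auto)
  with 1 show ?thesis by (simp add: a_def power2_eq_square)
qed

lemma contraction: "ip (Pop f) (Pop f) \<le> ip f f"
proof -
  have pn: "\<And>u. pi u \<noteq> 0" using pi_pos by (metis less_irrefl)
  have "ip (Pop f) (Pop f) = (\<Sum>u\<in>F. pi u * (Pop f u)\<^sup>2)"
    by (simp add: ip_def power2_eq_square mult.assoc)
  also have "\<dots> \<le> (\<Sum>u\<in>F. pi u * (\<Sum>v\<in>F. w u v * (f v)\<^sup>2))"
    by (rule sum_mono) (use pi_pos Pop_sq_le in \<open>auto intro: mult_left_mono less_imp_le\<close>)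
  also have "\<dots> = (\<Sum>u\<in>F. \<Sum>v\<in>F. cond u v * (f v)\<^sup>2)"
    using pn by (simp add: w_eq sum_distrib_left)
  also have "\<dots> = (\<Sum>v\<in>F. \<Sum>u\<in>F. cond u v * (f v)\<^sup>2)" by (rule sum.swap)
  also have "\<dots> = (\<Sum>v\<in>F. (\<Sum>u\<in>F. cond v u) * (f v)\<^sup>2)"
    by (intro sum.cong refl) (simp add: sum_distrib_right sym)
  also have "\<dots> \<le> (\<Sum>v\<in>F. pi v * (f v)\<^sup>2)"
    by (rule sum_mono, rule mult_right_mono) (auto intro: order_trans[OF cond_fin_le[OF finF] cv_le_pi])
  also have "\<dots> = ip f f" by (simp add: ip_def power2_eq_square mult.assoc)
  finally show ?thesis .
qed

fun ts :: "('v \<Rightarrow> real) \<Rightarrow> nat \<Rightarrow> ('v \<Rightarrow> real) \<times> ('v \<Rightarrow> real)" where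
  "ts g 0 = (g, \<lambda>_. 0)"
| "ts g (Suc k) = (\<lambda>u. Pop (fst (ts g k)) u - snd (ts g k) u + Pop (Pop (snd (ts g k))) u,
                   \<lambda>u. Pop (snd (ts g k)) u + fst (ts g k) u)"

definition tt where "tt g k = fst (ts g k)"
definition ss where "ss g k = snd (ts g k)"

lemma tt_0: "tt g 0 = g" and ss_0: "ss g 0 = (\<lambda>_. 0)"
  and tt_Suc: "tt g (Suc k) = (\<lambda>u. Pop (tt g k) u - ss g k u + Pop (Pop (ss g k)) u)"
  and ss_Suc: "ss g (Suc k) = (\<lambda>u. Pop (ss g k) u + tt g k u)"
  by (simp_all add: tt_def ss_def)

lemma inv_step:
  fixes t s :: "'v \<Rightarrow> real"
  defines "T \<equiv> (\<lambda>u. Pop t u - s u + Pop (Pop s) u)" and "S \<equiv> (\<lambda>u. Pop s u + t u)"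
  shows "ip T T + ip S S - ip (Pop S) (Pop S) = ip t t + ip s s - ip (Pop s) (Pop s)"
proof -
  have x0: "ip s t = ip t s" by (rule ip_sym)
  have x1: "ip s (Pop t) = ip t (Pop s)" by (metis ip_Pop ip_sym)
  have x2: "ip s (Pop (Pop t)) = ip t (Pop (Pop s))" by (metis ip_Pop ip_sym)
  have x3: "ip s (Pop (Pop (Pop t))) = ip t (Pop (Pop (Pop s)))" by (metis ip_Pop ip_sym)
  show ?thesis
    unfolding T_def S_def
    by (simp add: Pop_add Pop_diff ip_add_left ip_add_right ip_diff_left ip_diff_right ip_Pop x0 x1 x2 x3)
qed

lemma invariant: "ip (tt g k) (tt g k) + ip (ss g k) (ss g k) - ip (Pop (ss g k)) (Pop (ss g k)) = ip g g"
proof (induction k)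
  case 0 thus ?case by (simp add: tt_0 ss_0 ip_def Pop_zero)
next
  case (Suc k)
  thus ?case unfolding tt_Suc ss_Suc using inv_step by simp
qed

lemma tt_norm: "ip (tt g k) (tt g k) \<le> ip g g"
  using invariant[of g k] contraction[of "ss g k"] by linarith

lemma tt_1: "tt g (Suc 0) = Pop g"
  by (simp add: tt_Suc tt_0 ss_0 Pop_zero)

lemma tt_rec: "tt g (Suc (Suc k)) u + tt g k u = 2 * Pop (tt g (Suc k)) u"
  unfolding tt_Suc[of g "Suc k"] ss_Suc tt_Suc[of g k]
  by (simp add: Pop_add Pop_diff)

definition tau :: "('v \<Rightarrow> real) \<Rightarrow> int \<Rightarrow> 'v \<Rightarrow> real" where
  "tau g j = tt g (nat \<bar>j\<bar>)"

lemma tau_rec: "Pop (tau g j) u = (tau g (j+1) u + tau g (j-1) u) / 2"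
proof (cases "j = 0")
  case True thus ?thesis by (simp add: tau_def tt_1 tt_0)
next
  case False
  then obtain k where k: "nat \<bar>j\<bar> = Suc k" by (metis gr0_implies_Suc nat_0_iff abs_ge_zero abs_0_eq not_gr0 zero_less_nat_eq abs_le_zero_iff)
  show ?thesis
  proof (cases "j > 0")
    case True
    hence "nat \<bar>j+1\<bar> = Suc (Suc k)" "nat \<bar>j-1\<bar> = k" using k by auto
    thus ?thesis using tt_rec[of g k u] k by (simp add: tau_def)
  next
    case False
    hence "nat \<bar>j-1\<bar> = Suc (Suc k)" "nat \<bar>j+1\<bar> = k" using k \<open>j \<noteq> 0\<close> by auto
    thus ?thesis using tt_rec[of g k u] k by (simp add: tau_def)
  qed
qed

end

definition Lm :: "nat \<Rightarrow> bool list set" where "Lm m = {xs. length xs = m}"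
definition Ssum :: "bool list \<Rightarrow> int" where
  "Ssum xs = sum_list (map (\<lambda>b. if b then 1 else -1) xs)"

lemma Lm_fin: "finite (Lm m)"
  using finite_lists_length_eq[of "UNIV::bool set" m] by (simp add: Lm_def)

lemma Lm_0: "Lm 0 = {[]}" by (auto simp: Lm_def)

lemma sum_Lm_Suc: "(\<Sum>xs\<in>Lm (Suc m). f xs) = (\<Sum>xs\<in>Lm m. f (True#xs) + f (False#xs))"
proof -
  have eq: "Lm (Suc m) = Cons True ` Lm m \<union> Cons False ` Lm m"
  proof
    show "Lm (Suc m) \<subseteq> Cons True ` Lm m \<union> Cons False ` Lm m"
    proof
      fix xs assume "xs \<in> Lm (Suc m)"
      then obtain b ys where "xs = b#ys" "length ys = m" by (auto simp: Lm_def length_Suc_conv)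
      thus "xs \<in> Cons True ` Lm m \<union> Cons False ` Lm m" by (cases b) (auto simp: Lm_def)
    qed
    show "Cons True ` Lm m \<union> Cons False ` Lm m \<subseteq> Lm (Suc m)" by (auto simp: Lm_def)
  qed
  have "(\<Sum>xs\<in>Lm (Suc m). f xs) = (\<Sum>xs\<in>Cons True ` Lm m. f xs) + (\<Sum>xs\<in>Cons False ` Lm m. f xs)"
    unfolding eq by (rule sum.union_disjoint) (auto simp: Lm_fin)
  also have "\<dots> = (\<Sum>xs\<in>Lm m. f (True#xs)) + (\<Sum>xs\<in>Lm m. f (False#xs))"
    by (simp add: sum.reindex inj_on_def comp_def)
  finally show ?thesis by (simp add: sum.distrib)
qed

lemma Ssum_Cons: "Ssum (True#xs) = Ssum xs + 1" "Ssum (False#xs) = Ssum xs - 1"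
  by (simp_all add: Ssum_def)

lemma Ssum_abs: "\<bar>Ssum xs\<bar> \<le> int (length xs)"
proof (induction xs)
  case Nil thus ?case by (simp add: Ssum_def)
next
  case (Cons a xs)
  thus ?case by (cases a) (auto simp: Ssum_Cons abs_le_iff)
qed

lemma mgf: fixes l :: real shows "(\<Sum>xs\<in>Lm m. exp (l * of_int (Ssum xs))) = (exp l + exp (-l))^m"
proof (induction m)
  case 0 thus ?case by (simp add: Lm_0 Ssum_def)
next
  case (Suc m)
  have a: "exp (l * of_int (Ssum xs + 1)) = exp l * exp (l * of_int (Ssum xs))" for xs
  proof -
    have "exp (l * of_int (Ssum xs + 1)) = exp (l * of_int (Ssum xs) + l)" by (simp add: distrib_left)
    also have "\<dots> = exp l * exp (l * of_int (Ssum xs))" by (subst exp_add) (rule mult.commute)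
    finally show ?thesis .
  qed
  have b: "exp (l * of_int (Ssum xs - 1)) = exp (-l) * exp (l * of_int (Ssum xs))" for xs
    by (simp add: right_diff_distrib exp_diff exp_minus field_simps)
  have "(\<Sum>xs\<in>Lm (Suc m). exp (l * of_int (Ssum xs)))
      = (\<Sum>xs\<in>Lm m. (exp l + exp (-l)) * exp (l * of_int (Ssum xs)))"
    unfolding sum_Lm_Suc Ssum_Cons a b by (simp add: distrib_right)
  also have "\<dots> = (exp l + exp (-l)) * (exp l + exp (-l))^m"
    by (simp add: sum_distrib_left[symmetric] Suc)
  finally show ?case by simp
qed

lemma cosh_bd:
  fixes l :: real
  assumes "0 \<le> l" "l \<le> 1"
  shows "exp l + exp (-l) \<le> 2 * exp (l\<^sup>2)"
proof -
  have e1: "exp l \<le> 1 + l + l\<^sup>2" by (rule exp_bound) (use assms in auto)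
  have pos: "0 < 1 + l" using assms by simp
  have "exp (-l) = 1 / exp l" by (simp add: exp_minus inverse_eq_divide)
  also have "\<dots> \<le> 1 / (1 + l)"
    using pos exp_ge_add_one_self[of l] by (intro divide_left_mono) auto
  also have "\<dots> \<le> 1 - l + l\<^sup>2"
  proof -
    have "1 \<le> (1 - l + l\<^sup>2) * (1 + l)"
      using assms by (simp add: algebra_simps power2_eq_square power3_eq_cube)
    thus ?thesis using pos by (simp add: divide_le_eq)
  qed
  finally have e2: "exp (-l) \<le> 1 - l + l\<^sup>2" .
  have e3: "1 + l\<^sup>2 \<le> exp (l\<^sup>2)" by (rule exp_ge_add_one_self)
  show ?thesis using e1 e2 e3 by linarith
qed

lemma tail:
  fixes d :: real
  assumes m: "m \<ge> 1" and d: "d \<ge> 0"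
  shows "(\<Sum>xs\<in>Lm m. if d \<le> \<bar>real_of_int (Ssum xs)\<bar> then 1 else 0) \<le> 2 * 2^m * exp (-(d\<^sup>2) / (4 * m))"
proof (cases "d \<le> m")
  case False
  have "(\<Sum>xs\<in>Lm m. if d \<le> \<bar>real_of_int (Ssum xs)\<bar> then 1 else (0::real)) = 0"
  proof (rule sum.neutral, intro ballI)
    fix xs assume "xs \<in> Lm m"
    hence "\<bar>real_of_int (Ssum xs)\<bar> \<le> m" using Ssum_abs[of xs] by (simp add: Lm_def)
    thus "(if d \<le> \<bar>real_of_int (Ssum xs)\<bar> then 1 else 0) = (0::real)" using False by auto
  qed
  thus ?thesis by simp
next
  case True
  define l where "l = d / (2 * m)"
  have mpos: "real m > 0" using m by simp
  have l0: "0 \<le> l" and l1: "l \<le> 1" using d True mpos by (auto simp: l_def field_simps)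
  have pt: "(if d \<le> \<bar>S\<bar> then 1 else 0)
      \<le> exp (- l * d) * exp (l * S) + exp (- l * d) * exp ((-l) * S)" for S :: real
  proof -
    have nn: "0 \<le> exp (- l * d) * exp (l * S)" "0 \<le> exp (- l * d) * exp ((-l) * S)" by auto
    show ?thesis
    proof (cases "d \<le> \<bar>S\<bar>")
      case True
      hence if1: "(if d \<le> \<bar>S\<bar> then 1 else 0) = (1::real)" by simp
      from True have "d \<le> S \<or> d \<le> -S" by linarith
      thus ?thesis
      proof
        assume "d \<le> S"
        hence "0 \<le> - l * d + l * S" using mult_left_mono[OF \<open>d \<le> S\<close> l0] by simp
        hence "1 \<le> exp (- l * d + l * S)" by simp
        hence "1 \<le> exp (- l * d) * exp (l * S)" by (simp only: exp_add)
        thus ?thesis using nn if1 by linarith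
      next
        assume "d \<le> -S"
        hence "0 \<le> - l * d + (-l) * S" using mult_left_mono[OF \<open>d \<le> -S\<close> l0] by simp
        hence "1 \<le> exp (- l * d + (-l) * S)" by simp
        hence "1 \<le> exp (- l * d) * exp ((-l) * S)" by (simp only: exp_add)
        thus ?thesis using nn if1 by linarith
      qed
    next
      case False thus ?thesis using nn by simp
    qed
  qed
  have "(\<Sum>xs\<in>Lm m. if d \<le> \<bar>real_of_int (Ssum xs)\<bar> then 1 else 0)
      \<le> (\<Sum>xs\<in>Lm m. exp (- l * d) * exp (l * of_int (Ssum xs)) + exp (- l * d) * exp ((-l) * of_int (Ssum xs)))"
    by (rule sum_mono) (rule pt)
  also have "\<dots> = exp (- l * d) * ((exp l + exp (-l))^m + (exp (-l) + exp (- (-l)))^m)"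
    using mgf[of l m] mgf[of "-l" m] by (simp add: sum.distrib sum_distrib_left[symmetric] distrib_left)
  also have "\<dots> = 2 * exp (- l * d) * (exp l + exp (-l))^m" by (simp add: add.commute)
  also have "\<dots> \<le> 2 * exp (- l * d) * (2 * exp (l\<^sup>2))^m"
    by (intro mult_left_mono power_mono cosh_bd l0 l1) (auto intro: add_nonneg_nonneg)
  also have "\<dots> = 2 * 2^m * (exp (- l * d) * exp (real m * l\<^sup>2))"
    by (simp add: power_mult_distrib exp_of_nat_mult[symmetric])
  also have "exp (- l * d) * exp (real m * l\<^sup>2) = exp (- l * d + real m * l\<^sup>2)"
    by (rule exp_add[symmetric])
  also have "- l * d + real m * l\<^sup>2 = -(d\<^sup>2) / (4 * m)"
    using mpos by (simp add: l_def field_simps power2_eq_square)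
  finally show ?thesis .
qed

context net
begin

lemma gdist_rel: "(adj cond ^^ gdist cond x y) x y"
  unfolding gdist_def by (rule LeastI_ex) (rule rtranclp_imp_relpowp[OF conn])

lemma gdist_le: "(adj cond ^^ n) x y \<Longrightarrow> gdist cond x y \<le> n"
  unfolding gdist_def by (rule Least_le)

lemma gdist_0: "gdist cond x x = 0"
  using gdist_le[OF relpowp_0_I[of "adj cond" x]] by simp

lemma gdist_step:
  assumes "cond z v \<noteq> 0"
  shows "gdist cond r z \<le> Suc (gdist cond r v)"
proof -
  have "adj cond v z" using assms nonneg[of z v] sym[of z v] by (simp add: adj_def)
  hence "(adj cond ^^ Suc (gdist cond r v)) r z" by (rule relpowp_Suc_I[OF gdist_rel])
  thus ?thesis by (rule gdist_le)
qed

end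

definition dlt :: "'v \<Rightarrow> 'v \<Rightarrow> real" where "dlt r = (\<lambda>u. if u = r then 1 else 0)"

context fin
begin

definition suppB :: "'v \<Rightarrow> ('v \<Rightarrow> real) \<Rightarrow> nat \<Rightarrow> bool" where
  "suppB r f k \<longleftrightarrow> (\<forall>z. f z \<noteq> 0 \<longrightarrow> gdist cond r z < k)"

lemma suppB_Pop:
  assumes "suppB r f k" shows "suppB r (Pop f) (Suc k)"
  unfolding suppB_def
proof (intro allI impI)
  fix z assume "Pop f z \<noteq> 0"
  then obtain v where v: "v \<in> F" "w z v * f v \<noteq> 0" unfolding Pop_def by (meson sum.neutral)
  hence "cond z v \<noteq> 0" "f v \<noteq> 0" by (auto simp: w_eq)
  hence "gdist cond r z \<le> Suc (gdist cond r v)" "gdist cond r v < k"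
    using gdist_step assms by (auto simp: suppB_def)
  thus "gdist cond r z < Suc k" by linarith
qed

lemma suppB_mono: "suppB r f k \<Longrightarrow> k \<le> k' \<Longrightarrow> suppB r f k'"
  by (auto simp: suppB_def)

lemma suppB_comb3:
  assumes "suppB r f k" "suppB r g k" "suppB r h k" shows "suppB r (\<lambda>u. f u - g u + h u) k"
  unfolding suppB_def
proof (intro allI impI)
  fix z assume "f z - g z + h z \<noteq> 0"
  hence "f z \<noteq> 0 \<or> g z \<noteq> 0 \<or> h z \<noteq> 0" by auto
  thus "gdist cond r z < k" using assms unfolding suppB_def by blast
qed
lemma suppB_add:
  assumes "suppB r f k" "suppB r g k" shows "suppB r (\<lambda>u. f u + g u) k"
  unfolding suppB_def
proof (intro allI impI)
  fix z assume "f z + g z \<noteq> 0"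
  hence "f z \<noteq> 0 \<or> g z \<noteq> 0" by auto
  thus "gdist cond r z < k" using assms unfolding suppB_def by blast
qed

lemma supp_ts:
  assumes "suppB r g 1"
  shows "suppB r (tt g k) (Suc k) \<and> suppB r (ss g k) k"
proof (induction k)
  case 0 thus ?case using assms by (simp add: tt_0 ss_0 suppB_def)
next
  case (Suc k)
  hence t: "suppB r (tt g k) (Suc k)" and s: "suppB r (ss g k) k" by auto
  have 1: "suppB r (tt g (Suc k)) (Suc (Suc k))"
    unfolding tt_Suc
    by (rule suppB_comb3[OF suppB_Pop[OF t] suppB_mono[OF s] suppB_Pop[OF suppB_Pop[OF s]]]) simp
  have 2: "suppB r (ss g (Suc k)) (Suc k)"
    unfolding ss_Suc by (rule suppB_add[OF suppB_Pop[OF s] t])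
  show ?case using 1 2 by simp
qed

lemma ip_dlt: "r \<in> F \<Longrightarrow> ip (dlt r) (dlt r) = pi r"
  by (simp add: ip_def dlt_def if_distrib finF sum.delta cong: if_cong)

lemma tt_bound:
  assumes z: "z \<in> F" and r: "r \<in> F"
  shows "\<bar>tt (dlt r) k z\<bar> \<le> sqrt (pi r / pi z)"
proof -
  define t where "t = tt (dlt r) k"
  have nn: "0 \<le> pi u * t u * t u" for u
    using pi_pos[of u] by (simp add: mult.assoc)
  have "pi z * t z * t z \<le> ip t t"
    unfolding ip_def by (rule member_le_sum) (use z nn finF in auto)
  also have "\<dots> \<le> pi r" using tt_norm[of "dlt r" k] ip_dlt[OF r] by (simp add: t_def)
  finally have "(t z)\<^sup>2 \<le> pi r / pi z"
    using pi_pos[of z] by (simp add: pos_le_divide_eq power2_eq_square mult.commute mult.left_commute)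
  hence "sqrt ((t z)\<^sup>2) \<le> sqrt (pi r / pi z)" by (rule real_sqrt_le_mono)
  thus ?thesis by (simp add: t_def)
qed

lemma tau_zero:
  assumes "real_of_int \<bar>j\<bar> < real (gdist cond r z)"
  shows "tau (dlt r) j z = 0"
proof -
  have "suppB r (dlt r) 1" by (simp add: suppB_def dlt_def gdist_0)
  hence "suppB r (tt (dlt r) (nat \<bar>j\<bar>)) (Suc (nat \<bar>j\<bar>))" using supp_ts by blast
  moreover have "\<not> gdist cond r z < Suc (nat \<bar>j\<bar>)" using assms by linarith
  ultimately show ?thesis by (auto simp: suppB_def tau_def)
qed

lemma expand: "(Pop ^^ m) g u = (\<Sum>xs\<in>Lm m. tau g (Ssum xs) u) / 2^m"
proof (induction m arbitrary: u)
  case 0 thus ?case by (simp add: Lm_0 Ssum_def tau_def tt_0)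
next
  case (Suc m)
  have IHf: "(Pop ^^ m) g = (\<lambda>u. (\<Sum>xs\<in>Lm m. tau g (Ssum xs) u) / 2^m)"
    by (rule ext) (rule Suc.IH)
  have "(Pop ^^ Suc m) g u = Pop (\<lambda>u. (\<Sum>xs\<in>Lm m. tau g (Ssum xs) u) / 2^m) u"
    by (simp add: IHf)
  also have "\<dots> = (\<Sum>xs\<in>Lm m. Pop (tau g (Ssum xs)) u) / 2^m"
    by (simp add: Pop_div Pop_sum)
  also have "\<dots> = (\<Sum>xs\<in>Lm m. (tau g (Ssum xs + 1) u + tau g (Ssum xs - 1) u) / 2) / 2^m"
    by (simp add: tau_rec)
  also have "\<dots> = (\<Sum>xs\<in>Lm (Suc m). tau g (Ssum xs) u) / 2^(Suc m)"
    by (simp add: sum_Lm_Suc Ssum_Cons sum_divide_distrib[symmetric])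
  finally show ?case .
qed

lemma qF_Pop: "(\<lambda>x. qF F m x r) = (Pop ^^ m) (dlt r)"
proof (induction m)
  case 0 thus ?case by (auto simp: dlt_def)
next
  case (Suc m)
  show ?case by (simp add: Suc[symmetric]) (simp add: Pop_def)
qed

lemma CVfin:
  assumes z: "z \<in> F" and r: "r \<in> F" and m: "m \<ge> 1"
  shows "qF F m z r \<le> 2 * sqrt (pi r / pi z) * exp (-(real (gdist cond r z))\<^sup>2 / (4 * m))"
proof -
  define d where "d = real (gdist cond r z)"
  define M where "M = sqrt (pi r / pi z)"
  have M0: "0 \<le> M" unfolding M_def using pi_pos by (simp add: less_imp_le)
  have pw: "\<bar>tau (dlt r) j z\<bar> \<le> M * (if d \<le> \<bar>real_of_int j\<bar> then 1 else 0)" for j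
  proof (cases "d \<le> \<bar>real_of_int j\<bar>")
    case True thus ?thesis using tt_bound[OF z r] by (simp add: M_def tau_def)
  next
    case False thus ?thesis using tau_zero[of j r z] by (simp add: d_def)
  qed
  have "qF F m z r = (\<Sum>xs\<in>Lm m. tau (dlt r) (Ssum xs) z) / 2^m"
    using fun_cong[OF qF_Pop[of m r], of z] expand by simp
  also have "\<dots> \<le> (\<Sum>xs\<in>Lm m. M * (if d \<le> \<bar>real_of_int (Ssum xs)\<bar> then 1 else 0)) / 2^m"
  proof (intro divide_right_mono sum_mono)
    fix xs show "tau (dlt r) (Ssum xs) z \<le> M * (if d \<le> \<bar>real_of_int (Ssum xs)\<bar> then 1 else 0)"
      by (rule order_trans[OF abs_ge_self pw])
  qed simp
  also have "\<dots> = M * (\<Sum>xs\<in>Lm m. (if d \<le> \<bar>real_of_int (Ssum xs)\<bar> then 1 else 0)) / 2^m"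
    by (simp add: sum_distrib_left)
  also have "\<dots> \<le> M * (2 * 2^m * exp (-(d\<^sup>2) / (4 * m))) / 2^m"
    by (intro divide_right_mono mult_left_mono tail m M0) (auto simp: d_def)
  also have "\<dots> = 2 * M * exp (-(d\<^sup>2) / (4 * m))" by simp
  finally show ?thesis by (simp add: M_def d_def)
qed

end

context net
begin

lemma CV:
  assumes m1: "m \<ge> 1"
  shows "p m z r \<le> 2 * sqrt (pi r / pi z) * exp (-(real (gdist cond r z))\<^sup>2 / (4 * m))"
proof (rule field_le_epsilon)
  fix e :: real assume e: "0 < e"
  obtain G where G: "finite G" "p m z r \<le> qF G m z r + e" using approx[OF e] by blast
  define G' where "G' = G \<union> {z, r}"
  have fG': "finite G'" using G by (simp add: G'_def)
  interpret FF: fin cond K G' by (intro fin.intro net_axioms) (simp add: fin_axioms_def fG')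
  have "qF G m z r \<le> qF G' m z r" by (rule qF_mono) (use fG' in \<open>auto simp: G'_def\<close>)
  also have "\<dots> \<le> 2 * sqrt (pi r / pi z) * exp (-(real (gdist cond r z))\<^sup>2 / (4 * m))"
    by (rule FF.CVfin) (use m1 in \<open>auto simp: G'_def\<close>)
  finally show "p m z r \<le> 2 * sqrt (pi r / pi z) * exp (-(real (gdist cond r z))\<^sup>2 / (4 * m)) + e"
    using G by linarith
qed

lemma survive:
  assumes d0: "0 \<le> \<delta>" and d1: "\<delta> \<le> 1"
    and kill: "\<And>u. real (gdist cond r u) < R \<Longrightarrow> \<delta> \<le> K u / pi u"
    and E: "0 \<le> E"
    and far: "\<And>z j. 1 \<le> j \<Longrightarrow> j \<le> n \<Longrightarrow> R \<le> real (gdist cond r z) \<Longrightarrow> p j z r \<le> E"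
  shows "m \<le> n \<Longrightarrow> p m x r \<le> (1 - \<delta>)^m + E"
proof (induction m arbitrary: x)
  case 0 thus ?case using p_le1[of 0 x r] E by simp
next
  case (Suc m)
  have pw: "0 \<le> (1 - \<delta>)^m" "0 \<le> (1 - \<delta>)^Suc m" using d1 by auto
  show ?case
  proof (cases "R \<le> real (gdist cond r x)")
    case True
    thus ?thesis using far[of "Suc m" x] Suc.prems pw by force
  next
    case False
    hence kx: "\<delta> \<le> K x / pi x" using kill by simp
    have IH: "p m z r \<le> (1 - \<delta>)^m + E" for z using Suc by simp
    have "p (Suc m) x r \<le> (cv cond x / pi x) * ((1 - \<delta>)^m + E)"
      using wf_bound[of "\<lambda>z. p m z r" "(1 - \<delta>)^m + E" x] IH p_nn by simp
    also have "cv cond x / pi x = 1 - K x / pi x"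
      using pi_pos[of x] by (simp add: pi_def field_simps)
    also have "(1 - K x / pi x) * ((1 - \<delta>)^m + E) \<le> (1 - \<delta>) * ((1 - \<delta>)^m + E)"
      by (rule mult_right_mono) (use kx pw E in auto)
    also have "\<dots> \<le> (1 - \<delta>)^Suc m + E" using d0 E by (simp add: algebra_simps mult_left_le_one_le)
    finally show ?thesis .
  qed
qed

end

lemma hbound:
  fixes b R \<gamma> :: real
  assumes g: "\<gamma> > 0" and b2: "2 \<le> b" and bR: "b \<le> R"
  shows "min (ln 2 powr \<gamma> / R) ((ln R / 2) powr \<gamma> / R\<^sup>2) \<le> b powr (-2) * ln b powr \<gamma>"
proof -
  have bp: "b > 0" and Rp: "R > 0" using b2 bR by auto
  have bpow: "b powr (-2) = 1 / b\<^sup>2"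
    using bp by (simp add: powr_minus powr_numeral divide_inverse)
  have lb: "ln 2 \<le> ln b" using b2 by simp
  have l2: "0 < ln (2::real)" by simp
  show ?thesis
  proof (cases "b\<^sup>2 \<le> R")
    case True
    have "1 / R \<le> 1 / b\<^sup>2" using True bp Rp by (intro divide_left_mono) auto
    moreover have "ln 2 powr \<gamma> \<le> ln b powr \<gamma>" using lb l2 g by (intro powr_mono2) auto
    ultimately have "(1 / R) * ln 2 powr \<gamma> \<le> (1 / b\<^sup>2) * ln b powr \<gamma>"
      by (intro mult_mono) auto
    thus ?thesis by (simp add: bpow min_le_iff_disj)
  next
    case False
    have "b\<^sup>2 \<le> R\<^sup>2" using bR bp by (intro power_mono) auto
    hence "1 / R\<^sup>2 \<le> 1 / b\<^sup>2" using bp Rp by (intro divide_left_mono) auto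
    moreover have "ln R / 2 \<le> ln b"
    proof -
      have "ln R \<le> ln (b\<^sup>2)" by (subst ln_le_cancel_iff) (use False Rp bp in auto)
      also have "\<dots> = 2 * ln b" using bp by (simp add: ln_realpow)
      finally show ?thesis by simp
    qed
    moreover have "0 \<le> ln R / 2" using bR b2 by simp
    ultimately have "(1 / R\<^sup>2) * (ln R / 2) powr \<gamma> \<le> (1 / b\<^sup>2) * ln b powr \<gamma>"
      using g by (intro mult_mono powr_mono2) auto
    thus ?thesis by (simp add: bpow min_le_iff_disj)
  qed
qed

lemma netI:
  assumes "network cond" "cmin cond > 0"
  shows "net cond (killing \<gamma> cond r)"
proof -
  have cvnn: "0 \<le> cv cond u" for u
    unfolding cv_def using assms(1) by (intro infsum_nonneg) (auto simp: network_def)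
  have "cmin cond \<le> cv cond u" for u
    unfolding cmin_def by (rule cINF_lower) (auto intro!: bdd_belowI[of _ 0] cvnn)
  hence cvp: "0 < cv cond u" for u using assms(2) by (meson less_le_trans)
  show ?thesis
    using assms(1) cvp cvnn
    by unfold_locales (auto simp: network_def killing_def)
qed

locale knet = net cond "killing \<gamma> cond r" for \<gamma> :: real and cond :: "'v \<Rightarrow> 'v \<Rightarrow> real" and r :: 'v +
  assumes cm: "cmin cond > 0"
begin

lemma cmin_le: "cmin cond \<le> cv cond u"
  unfolding cmin_def
  by (rule cINF_lower) (auto intro!: bdd_belowI[of _ 0] less_imp_le cvpos)

definition mu where "mu u = min 1 (bracket cond r u powr (-2) * ln (bracket cond r u) powr \<gamma>)"

lemma K_eq: "killing \<gamma> cond r u = cv cond u * mu u" by (simp add: killing_def mu_def)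

lemma mu01: "0 \<le> mu u" "mu u \<le> 1" by (auto simp: mu_def)

lemma pi_eq: "pi u = cv cond u * (1 + mu u)" by (simp add: pi_def K_eq algebra_simps)

lemma kill_ratio: "mu u / 2 \<le> killing \<gamma> cond r u / pi u"
proof -
  have c: "cv cond u > 0" by (rule cvpos)
  have "killing \<gamma> cond r u / pi u = mu u / (1 + mu u)"
    using c mu01[of u] by (simp add: K_eq pi_eq)
  also have "mu u / 2 \<le> mu u / (1 + mu u)"
    using mu01[of u] by (intro divide_left_mono) auto
  finally show ?thesis by simp
qed

lemma pi_le2: "pi u \<le> 2 * cv cond u"
  using mu01[of u] cvpos[of u] by (simp add: pi_eq mult_left_le)

lemma ratio_bd: "sqrt (pi r / pi z) \<le> sqrt (2 * cv cond r / cmin cond)"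
proof (rule real_sqrt_le_mono)
  have "pi r / pi z \<le> 2 * cv cond r / pi z"
    using pi_le2[of r] pi_pos[of z] by (intro divide_right_mono) auto
  also have "\<dots> \<le> 2 * cv cond r / cmin cond"
    using cm cmin_le[of z] cv_le_pi[of z] cvpos[of r]
    by (intro divide_left_mono) (auto intro: mult_pos_pos)
  finally show "pi r / pi z \<le> 2 * cv cond r / cmin cond" .
qed

lemma C_eq: "2 * sqrt (2 * cv cond r / cmin cond) = sqrt (8 * cv cond r / cmin cond)"
proof -
  have s4: "sqrt (4::real) = 2" using real_sqrt_abs[of 2] by simp
  have "sqrt (8 * cv cond r / cmin cond) = sqrt (4 * (2 * cv cond r / cmin cond))" by simp
  also have "\<dots> = sqrt 4 * sqrt (2 * cv cond r / cmin cond)" by (rule real_sqrt_mult)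
  finally show ?thesis using s4 by simp
qed

lemma C_ge2: "2 \<le> sqrt (8 * cv cond r / cmin cond)"
proof -
  have "1 \<le> cv cond r / cmin cond" using cmin_le[of r] cm by simp
  hence "4 \<le> 8 * cv cond r / cmin cond" by simp
  hence "sqrt 4 \<le> sqrt (8 * cv cond r / cmin cond)" by (rule real_sqrt_le_mono)
  thus ?thesis by simp
qed

lemma far_bd:
  assumes j1: "1 \<le> j" and jn: "j \<le> n" and R0: "0 \<le> R" and Rd: "R \<le> real (gdist cond r z)"
  shows "p j z r \<le> sqrt (8 * cv cond r / cmin cond) * exp (- (R\<^sup>2 / (4 * n)))"
proof -
  define d where "d = real (gdist cond r z)"
  have "p j z r \<le> 2 * sqrt (pi r / pi z) * exp (-(d\<^sup>2) / (4 * j))"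
    using CV[OF j1] by (simp add: d_def)
  also have "\<dots> \<le> 2 * sqrt (2 * cv cond r / cmin cond) * exp (- (R\<^sup>2 / (4 * n)))"
  proof -
    have "R\<^sup>2 \<le> d\<^sup>2" using R0 Rd by (intro power_mono) (auto simp: d_def)
    moreover have "real j \<le> real n" "0 < real j" using j1 jn by auto
    ultimately have "R\<^sup>2 / (4 * n) \<le> d\<^sup>2 / (4 * j)"
      by (intro frac_le) auto
    hence B: "exp (-(d\<^sup>2) / (4 * j)) \<le> exp (- (R\<^sup>2 / (4 * n)))" by simp
    have sq: "0 \<le> sqrt (2 * cv cond r / cmin cond)" using cvpos[of r] cm by simp
    show ?thesis
      by (rule mult_mono[OF mult_left_mono[OF ratio_bd]]) (use B sq in auto)
  qed
  finally show ?thesis by (simp add: C_eq)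
qed

lemma bound_n:
  fixes n :: nat
  defines "L \<equiv> ln (real n) powr (\<gamma> / 2)" and "c \<equiv> 4 powr (-\<gamma>)"
  assumes g: "\<gamma> > 0" and ln1: "1 \<le> ln (real n)" and n4: "4 \<le> real n"
    and h1: "c * L \<le> real n" and h2: "c * L * sqrt (real n * L) \<le> real n * ln 2 powr \<gamma>"
  shows "p n x r \<le> exp (- (c / 2 * L)) + sqrt (8 * cv cond r / cmin cond) * exp (- (L / 4))"
proof -
  define R where "R = sqrt (real n * L)"
  define A2 where "A2 = ln 2 powr \<gamma> / R"
  define A3 where "A3 = (ln R / 2) powr \<gamma> / R\<^sup>2"
  define \<delta> where "\<delta> = min 1 (min A2 A3) / 2"
  define E where "E = sqrt (8 * cv cond r / cmin cond) * exp (- (L / 4))"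
  have npos: "0 < real n" using n4 by simp
  have L1: "1 \<le> L" unfolding L_def using ln1 g by (simp add: ge_one_powr_ge_zero)
  have Lpos: "0 < L" using L1 by simp
  have R2: "R\<^sup>2 = real n * L" unfolding R_def using npos Lpos by simp
  have Rsn: "sqrt (real n) \<le> R" unfolding R_def using L1 npos
    by (intro real_sqrt_le_mono) simp
  have sn2: "2 \<le> sqrt (real n)" using n4 real_sqrt_le_mono[OF n4] by simp
  have R2le: "2 \<le> R" using Rsn sn2 by linarith
  have Rpos: "0 < R" using R2le by simp
  have A2nn: "0 \<le> A2" and A3nn: "0 \<le> A3" unfolding A2_def A3_def using Rpos by auto
  have d0: "0 \<le> \<delta>" and d1: "\<delta> \<le> 1" unfolding \<delta>_def using A2nn A3nn by auto
  have E0: "0 \<le> E" unfolding E_def using cvpos[of r] cm by (intro mult_nonneg_nonneg) auto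
  have kill: "\<delta> \<le> killing \<gamma> cond r u / pi u" if u: "real (gdist cond r u) < R" for u
  proof -
    define b where "b = bracket cond r u"
    have b2: "2 \<le> b" unfolding b_def bracket_def by simp
    have bR: "b \<le> R" unfolding b_def bracket_def using u R2le by (simp add: max_def)
    have "min A2 A3 \<le> b powr (-2) * ln b powr \<gamma>"
      unfolding A2_def A3_def by (rule hbound[OF g b2 bR])
    hence "min 1 (min A2 A3) \<le> mu u" by (auto simp: mu_def b_def)
    hence "\<delta> \<le> mu u / 2" by (simp add: \<delta>_def)
    thus ?thesis using kill_ratio[of u] by linarith
  qed
  have far: "p j z r \<le> E" if "1 \<le> j" "j \<le> n" "R \<le> real (gdist cond r z)" for j z
  proof -
    have "p j z r \<le> sqrt (8 * cv cond r / cmin cond) * exp (- (R\<^sup>2 / (4 * n)))"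
      by (rule far_bd) (use that Rpos in auto)
    also have "R\<^sup>2 / (4 * n) = L / 4" using R2 npos by simp
    finally show ?thesis by (simp add: E_def)
  qed
  have surv: "p n x r \<le> (1 - \<delta>)^n + E"
    by (rule survive[OF d0 d1 kill E0 far]) auto
  have "(1 - \<delta>)^n \<le> (exp (-\<delta>))^n"
    using d1 exp_ge_add_one_self[of "-\<delta>"] by (intro power_mono) auto
  also have "\<dots> = exp (- (real n * \<delta>))" by (simp add: exp_of_nat_mult[symmetric])
  also have "\<dots> \<le> exp (- (c / 2 * L))"
  proof -
    have c0: "0 < c" unfolding c_def by simp
    have i1: "c * L \<le> real n * 1" using h1 by simp
    have i2: "c * L \<le> real n * A2"
      unfolding A2_def using h2 Rpos npos by (simp add: R_def field_simps)
    have i3: "c * L \<le> real n * A3"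
    proof -
      have lnR: "ln (real n) / 4 \<le> ln R / 2"
      proof -
        have "ln (sqrt (real n)) \<le> ln R" by (subst ln_le_cancel_iff) (use Rsn npos Rpos in auto)
        thus ?thesis using npos by (simp add: ln_sqrt)
      qed
      have LL: "L * L = ln (real n) powr \<gamma>"
        unfolding L_def by (metis powr_add field_sum_of_halves)
      have "c * L * L = c * (L * L)" by (simp only: mult.assoc)
      also have "\<dots> = ln (real n) powr \<gamma> / 4 powr \<gamma>"
        unfolding LL c_def by (simp add: powr_minus divide_inverse mult.commute)
      also have "\<dots> = (ln (real n) / 4) powr \<gamma>" using ln1 by (simp add: powr_divide)
      also have "\<dots> \<le> (ln R / 2) powr \<gamma>" using lnR ln1 g by (intro powr_mono2) auto
      finally have "c * L * L \<le> (ln R / 2) powr \<gamma>" .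
      thus ?thesis unfolding A3_def R2 using npos Lpos by (simp add: field_simps)
    qed
    have "c * L \<le> real n * min 1 (min A2 A3)" using i1 i2 i3 by (simp add: min_def)
    hence "c / 2 * L \<le> real n * \<delta>" by (simp add: \<delta>_def)
    thus ?thesis by simp
  qed
  finally show ?thesis using surv by (simp add: E_def)
qed

end

lemma evt:
  fixes \<gamma> c B :: real
  assumes "\<gamma> > 0" "c > 0" "B > 0"
  shows "eventually (\<lambda>x::real. 1 \<le> ln x \<and> 4 \<le> x \<and> c * ln x powr (\<gamma>/2) \<le> x \<and>
            c * ln x powr (\<gamma>/2) * sqrt (x * ln x powr (\<gamma>/2)) \<le> x * B) at_top"
  using assms by (intro eventually_conj) real_asymp+

lemma evt2:
  fixes \<gamma> \<kappa> A :: real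
  assumes "\<gamma> > 2" "\<kappa> > 0"
  shows "filterlim (\<lambda>x::real. (A - \<kappa> * ln x powr (\<gamma>/2)) / ln x) at_bot at_top"
  using assms by real_asymp

lemma triv:
  fixes q C y :: real
  assumes "q \<le> 1" "2 \<le> C" "y \<le> ln 2"
  shows "q \<le> C * exp (- y)"
proof -
  have "exp (- ln 2) \<le> exp (- y)" using assms(3) by simp
  hence "1 / 2 \<le> exp (- y)" by (simp add: exp_minus)
  hence "2 * (1/2) \<le> C * exp (- y)" using assms(2) by (intro mult_mono) auto
  thus ?thesis using assms(1) by simp
qed

lemma knetI:
  assumes "network cond" "cmin cond > 0"
  shows "knet \<gamma> cond r"
  using netI[OF assms, of \<gamma> r] assms(2) by (intro knet.intro) (auto simp: knet_axioms_def)

lemma part1_pos: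
  fixes \<gamma> :: real
  assumes g: "\<gamma> > 0"
  shows "\<exists>\<kappa>>0. \<forall>(cond :: 'v \<Rightarrow> 'v \<Rightarrow> real) r.
            network cond \<and> cmin cond > 0 \<longrightarrow>
            (\<forall>x n. n \<ge> 2 \<longrightarrow>
               pn cond (killing \<gamma> cond r) n x r
                 \<le> sqrt (8 * cv cond r / cmin cond) * exp (- \<kappa> * (ln (real n)) powr (\<gamma> / 2)))"
proof -
  define c where "c = (4::real) powr (-\<gamma>)"
  define b where "b = min (c / 2) (1/4)"
  define L where "L = (\<lambda>n::nat. ln (real n) powr (\<gamma>/2))"
  have c0: "c > 0" unfolding c_def by simp
  have b0: "b > 0" unfolding b_def using c0 by simp
  have l2: "ln 2 powr \<gamma> > 0" by simp
  obtain X where X: "\<And>x. x \<ge> X \<Longrightarrow> 1 \<le> ln x \<and> 4 \<le> x \<and> c * ln x powr (\<gamma>/2) \<le> x \<and>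
            c * ln x powr (\<gamma>/2) * sqrt (x * ln x powr (\<gamma>/2)) \<le> x * ln 2 powr \<gamma>"
    using evt[OF g c0 l2] unfolding eventually_at_top_linorder by blast
  define N0 where "N0 = max 4 (nat \<lceil>X\<rceil>)"
  have N04: "4 \<le> real N0" unfolding N0_def by simp
  have LN0: "L N0 > 0" unfolding L_def using N04 by simp
  define \<kappa> where "\<kappa> = min (b/2) (ln 2 / L N0)"
  have k0: "\<kappa> > 0" unfolding \<kappa>_def using b0 LN0 by simp
  show ?thesis
  proof (intro exI[of _ \<kappa>] conjI allI impI k0)
    fix cond :: "'v \<Rightarrow> 'v \<Rightarrow> real" and r x and n :: nat
    assume nc: "network cond \<and> cmin cond > 0" and n2: "n \<ge> 2"
    interpret KN: knet \<gamma> cond r by (rule knetI) (use nc in auto)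
    define C where "C = sqrt (8 * cv cond r / cmin cond)"
    have C2: "2 \<le> C" unfolding C_def by (rule KN.C_ge2)
    have Ln0: "0 \<le> L n" unfolding L_def by simp
    have goal: "KN.p n x r \<le> C * exp (- (\<kappa> * L n))"
    proof (cases "\<kappa> * L n \<le> ln 2")
      case True
      thus ?thesis using triv[OF KN.p_le1 C2 True] by simp
    next
      case False
      have nN0: "N0 \<le> n"
      proof (rule ccontr)
        assume "\<not> N0 \<le> n"
        hence "real n \<le> real N0" by simp
        hence "ln (real n) \<le> ln (real N0)" using n2 by simp
        hence "L n \<le> L N0" unfolding L_def using n2 g by (intro powr_mono2) auto
        hence "\<kappa> * L n \<le> (ln 2 / L N0) * L N0"
          using k0 Ln0 LN0 by (intro mult_mono) (auto simp: \<kappa>_def)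
        thus False using False LN0 by simp
      qed
      have "X \<le> real n"
        using nN0 real_nat_ceiling_ge[of X] unfolding N0_def by (simp add: max_def split: if_splits)
      note Xn = X[OF this]
      have bn: "KN.p n x r \<le> exp (- (c / 2 * L n)) + C * exp (- (L n / 4))"
        using KN.bound_n[of n x] g Xn by (simp add: L_def c_def C_def)
      have e1: "exp (- (c / 2 * L n)) \<le> C * exp (- (b * L n))"
      proof -
        have "b * L n \<le> c / 2 * L n" using Ln0 by (intro mult_right_mono) (auto simp: b_def)
        hence "exp (- (c / 2 * L n)) \<le> exp (- (b * L n))" by simp
        also have "\<dots> \<le> C * exp (- (b * L n))" using C2 by simp
        finally show ?thesis .
      qed
      have e2: "C * exp (- (L n / 4)) \<le> C * exp (- (b * L n))"
      proof -
        have "b * L n \<le> 1/4 * L n" using Ln0 by (intro mult_right_mono) (auto simp: b_def)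
        hence "exp (- (L n / 4)) \<le> exp (- (b * L n))" by simp
        thus ?thesis using C2 by (intro mult_left_mono) auto
      qed
      have e3: "2 * exp (- (b * L n)) \<le> exp (- (\<kappa> * L n))"
      proof -
        define y where "y = \<kappa> * L n"
        have y: "ln 2 < y" using False by (simp add: y_def)
        have kb: "\<kappa> \<le> b/2" unfolding \<kappa>_def by (rule min.cobounded1)
        have "\<kappa> * L n \<le> (b/2) * L n" using Ln0 kb by (intro mult_right_mono) auto
        hence "2 * y \<le> b * L n" unfolding y_def by simp
        hence "exp (- (b * L n)) \<le> exp (- y) * exp (- y)" by (simp add: exp_add[symmetric])
        moreover have "2 * exp (- y) \<le> 1"
        proof -
          have "exp (- y) \<le> exp (- ln 2)" using y by simp
          thus ?thesis by (simp add: exp_minus)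
        qed
        ultimately have "2 * exp (- (b * L n)) \<le> (2 * exp (- y)) * exp (- y)" by simp
        also have "\<dots> \<le> 1 * exp (- y)" by (rule mult_right_mono) (use \<open>2 * exp (- y) \<le> 1\<close> in auto)
        finally show ?thesis by (simp add: y_def)
      qed
      have "KN.p n x r \<le> C * (2 * exp (- (b * L n)))" using bn e1 e2 by simp
      also have "\<dots> \<le> C * exp (- (\<kappa> * L n))" using e3 C2 by (intro mult_left_mono) auto
      finally show ?thesis .
    qed
    show "pn cond (killing \<gamma> cond r) n x r
            \<le> sqrt (8 * cv cond r / cmin cond) * exp (- \<kappa> * (ln (real n)) powr (\<gamma> / 2))"
      using goal by (simp add: C_def L_def)
  qed
qed

lemma part1_nonpos:
  fixes \<gamma> :: real
  assumes g: "\<gamma> \<le> 0"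
  shows "\<exists>\<kappa>>0. \<forall>(cond :: 'v \<Rightarrow> 'v \<Rightarrow> real) r.
            network cond \<and> cmin cond > 0 \<longrightarrow>
            (\<forall>x n. n \<ge> 2 \<longrightarrow>
               pn cond (killing \<gamma> cond r) n x r
                 \<le> sqrt (8 * cv cond r / cmin cond) * exp (- \<kappa> * (ln (real n)) powr (\<gamma> / 2)))"
proof -
  define L2 where "L2 = ln (2::real) powr (\<gamma>/2)"
  have L2p: "L2 > 0" unfolding L2_def by simp
  define \<kappa> where "\<kappa> = ln 2 / L2"
  have k0: "\<kappa> > 0" unfolding \<kappa>_def using L2p by simp
  show ?thesis
  proof (intro exI[of _ \<kappa>] conjI allI impI k0)
    fix cond :: "'v \<Rightarrow> 'v \<Rightarrow> real" and r x and n :: nat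
    assume nc: "network cond \<and> cmin cond > 0" and n2: "n \<ge> 2"
    interpret KN: knet \<gamma> cond r by (rule knetI) (use nc in auto)
    have "ln (2::real) \<le> ln (real n)" using n2 by simp
    hence "ln (real n) powr (\<gamma>/2) \<le> L2" unfolding L2_def using g by (intro powr_mono2') auto
    hence "\<kappa> * ln (real n) powr (\<gamma>/2) \<le> \<kappa> * L2" using k0 by (intro mult_left_mono) auto
    also have "\<dots> = ln 2" unfolding \<kappa>_def using L2p by simp
    finally have y: "\<kappa> * ln (real n) powr (\<gamma>/2) \<le> ln 2" .
    show "pn cond (killing \<gamma> cond r) n x r
            \<le> sqrt (8 * cv cond r / cmin cond) * exp (- \<kappa> * (ln (real n)) powr (\<gamma> / 2))"
      using triv[OF KN.p_le1 KN.C_ge2 y] by simp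
  qed
qed

context knet
begin

lemma nbr: "\<exists>s. cond r s > 0"
proof (rule ccontr)
  assume "\<not> (\<exists>s. cond r s > 0)"
  hence "\<And>s. cond r s = 0" using nonneg by (metis less_eq_real_def)
  hence "cv cond r = 0" unfolding cv_def by (simp add: infsum_0)
  thus False using cvpos[of r] by simp
qed

lemma single: "w a b * p n b r \<le> p (Suc n) a r"
proof -
  have "sum (\<lambda>z. w a z * p n z r) {b} \<le> infsum (\<lambda>z. w a z * p n z r) UNIV"
    by (rule finite_sum_le_infsum[OF p_summ]) (auto intro: mult_nonneg_nonneg w_nn p_nn)
  thus ?thesis by simp
qed

lemma p_alt_pos:
  assumes s: "cond r s > 0"
  shows "p n (if even n then r else s) r > 0"
proof (induction n)
  case 0 thus ?case by simp
next
  case (Suc n)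
  define a where "a = (if even (Suc n) then r else s)"
  define b where "b = (if even n then r else s)"
  have "cond a b > 0" using s sym[of r s] by (auto simp: a_def b_def)
  hence "w a b > 0" using pi_pos[of a] by (simp add: w_eq)
  hence "0 < w a b * p n b r" using Suc by (simp add: b_def)
  also have "\<dots> \<le> p (Suc n) a r" by (rule single)
  finally show ?case by (simp add: a_def)
qed

end

lemma part2:
  fixes \<gamma> \<kappa> :: real and cond :: "'v \<Rightarrow> 'v \<Rightarrow> real"
  assumes g: "\<gamma> > 2" and k0: "\<kappa> > 0" and nc: "network cond" "cmin cond > 0"
    and H: "\<And>x n. n \<ge> 2 \<Longrightarrow> pn cond (killing \<gamma> cond r) n x r
                 \<le> sqrt (8 * cv cond r / cmin cond) * exp (- \<kappa> * (ln (real n)) powr (\<gamma> / 2))"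
  shows "filterlim (\<lambda>n. ln (SUP u. pn cond (killing \<gamma> cond r) n u r) / ln (real n)) at_bot sequentially"
proof -
  interpret KN: knet \<gamma> cond r by (rule knetI) (use nc in auto)
  define C where "C = sqrt (8 * cv cond r / cmin cond)"
  have C2: "2 \<le> C" unfolding C_def by (rule KN.C_ge2)
  obtain s where s: "cond r s > 0" using KN.nbr by blast
  define g where "g = (\<lambda>x::real. (ln C - \<kappa> * ln x powr (\<gamma>/2)) / ln x)"
  have gl: "filterlim g at_bot at_top" unfolding g_def by (rule evt2[OF g k0])
  have gs: "filterlim (\<lambda>n. g (real n)) at_bot sequentially"
    by (rule filterlim_compose[OF gl filterlim_real_sequentially])
  have bd: "ln (SUP u. KN.p n u r) / ln (real n) \<le> g (real n)" if n2: "n \<ge> 2" for n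
  proof -
    have bdd: "bdd_above (range (\<lambda>u. KN.p n u r))" by (auto intro!: bdd_aboveI[of _ 1] KN.p_le1)
    have pos: "0 < (SUP u. KN.p n u r)"
      using KN.p_alt_pos[OF s, of n] cSUP_upper[OF UNIV_I bdd] by (meson less_le_trans)
    have up: "(SUP u. KN.p n u r) \<le> C * exp (- \<kappa> * ln (real n) powr (\<gamma>/2))"
      by (rule cSUP_least) (use H[OF n2] in \<open>auto simp: C_def\<close>)
    have C0: "0 < C" using C2 by simp
    have "ln (SUP u. KN.p n u r) \<le> ln (C * exp (- \<kappa> * ln (real n) powr (\<gamma>/2)))"
      using pos up C0 by simp
    also have "\<dots> = ln C - \<kappa> * ln (real n) powr (\<gamma>/2)" using C0 by (simp add: ln_mult)
    finally have "ln (SUP u. KN.p n u r) \<le> ln C - \<kappa> * ln (real n) powr (\<gamma>/2)" .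
    moreover have "0 < ln (real n)" using n2 by simp
    ultimately show ?thesis unfolding g_def by (intro divide_right_mono) auto
  qed
  show ?thesis
    unfolding filterlim_at_bot
  proof
    fix Z :: real
    have "eventually (\<lambda>n. g (real n) \<le> Z) sequentially" using gs by (simp add: filterlim_at_bot)
    moreover have "eventually (\<lambda>n::nat. n \<ge> 2) sequentially" by (rule eventually_ge_at_top)
    ultimately show "eventually (\<lambda>n. ln (SUP u. KN.p n u r) / ln (real n) \<le> Z) sequentially"
      by eventually_elim (use bd in \<open>auto intro: order_trans\<close>)
  qed
qed

theorem lemma3p4:
  fixes \<gamma> :: real
  shows "(\<exists>\<kappa>>0. \<forall>(cond :: 'v \<Rightarrow> 'v \<Rightarrow> real) r.
            network cond \<and> cmin cond > 0 \<longrightarrow>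
            (\<forall>x n. n \<ge> 2 \<longrightarrow>
               pn cond (killing \<gamma> cond r) n x r
                 \<le> sqrt (8 * cv cond r / cmin cond) * exp (- \<kappa> * (ln (real n)) powr (\<gamma> / 2))))
       \<and> (\<gamma> > 2 \<longrightarrow> (\<forall>(cond :: 'v \<Rightarrow> 'v \<Rightarrow> real) r.
            network cond \<and> cmin cond > 0 \<longrightarrow>
            filterlim (\<lambda>n. ln (SUP u. pn cond (killing \<gamma> cond r) n u r) / ln (real n))
              at_bot sequentially))"
proof -
  have P1: "\<exists>\<kappa>>0. \<forall>(cond :: 'v \<Rightarrow> 'v \<Rightarrow> real) r.
            network cond \<and> cmin cond > 0 \<longrightarrow>
            (\<forall>x n. n \<ge> 2 \<longrightarrow>
               pn cond (killing \<gamma> cond r) n x r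
                 \<le> sqrt (8 * cv cond r / cmin cond) * exp (- \<kappa> * (ln (real n)) powr (\<gamma> / 2)))"
  proof (cases "\<gamma> > 0")
    case True thus ?thesis by (rule part1_pos)
  next
    case False thus ?thesis by (intro part1_nonpos) simp
  qed
  then obtain \<kappa> where k0: "\<kappa> > 0" and H: "\<forall>(cond :: 'v \<Rightarrow> 'v \<Rightarrow> real) r.
            network cond \<and> cmin cond > 0 \<longrightarrow>
            (\<forall>x n. n \<ge> 2 \<longrightarrow>
               pn cond (killing \<gamma> cond r) n x r
                 \<le> sqrt (8 * cv cond r / cmin cond) * exp (- \<kappa> * (ln (real n)) powr (\<gamma> / 2)))"
    by blast
  show ?thesis
  proof (intro conjI impI allI)
    show "\<exists>\<kappa>>0. \<forall>(cond :: 'v \<Rightarrow> 'v \<Rightarrow> real) r.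
            network cond \<and> cmin cond > 0 \<longrightarrow>
            (\<forall>x n. n \<ge> 2 \<longrightarrow>
               pn cond (killing \<gamma> cond r) n x r
                 \<le> sqrt (8 * cv cond r / cmin cond) * exp (- \<kappa> * (ln (real n)) powr (\<gamma> / 2)))"
      by (rule P1)
  next
    fix cond :: "'v \<Rightarrow> 'v \<Rightarrow> real" and r
    assume g: "\<gamma> > 2" and nc: "network cond \<and> cmin cond > 0"
    show "filterlim (\<lambda>n. ln (SUP u. pn cond (killing \<gamma> cond r) n u r) / ln (real n)) at_bot sequentially"
      by (rule part2[OF g k0]) (use nc H in auto)
  qed
qed

end
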